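(* Every $4$-edge-connected graph $G$ with at most $5$ vertices satisfies $\phi(G)<3$.
   Context: Graphs may have parallel edges but no loops. The flow index $\phi(G)$ is the least rational $k/d$ such that $G$ admits a circular $k/d$-flow, i.e. an orientation with an integer flow (conservation at every vertex) whose values lie in $\{\pm d,\pm(d+1),\dots,\pm(k-d)\}$. Equivalently, $\phi(G)<3$ iff $G$ has a strongly-connected orientation with outdegree $\equiv$ indegree $\pmod 3$ at every vertex. *)

theory Defs
  imports Complex_Main
begin

text \<open>A finite multigraph (parallel edges allowed, no loops) is given by a finite vertex
set V, a finite edge set E, and a map ends assigning to each edge its two endpoints
(in a fixed reference orientation, tail and head).\<close>

definition multigraph :: "'v set \<Rightarrow> 'e set \<Rightarrow> ('e \<Rightarrow> 'v \<times> 'v) \<Rightarrow> bool" where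
  "multigraph V E ends \<longleftrightarrow> finite V \<and> finite E \<and>
     (\<forall>e\<in>E. fst (ends e) \<in> V \<and> snd (ends e) \<in> V \<and> fst (ends e) \<noteq> snd (ends e))"

definition cut_edges :: "'e set \<Rightarrow> ('e \<Rightarrow> 'v \<times> 'v) \<Rightarrow> 'v set \<Rightarrow> 'e set" where
  "cut_edges E ends S = {e\<in>E. (fst (ends e) \<in> S) \<noteq> (snd (ends e) \<in> S)}"

definition k_edge_connected :: "nat \<Rightarrow> 'v set \<Rightarrow> 'e set \<Rightarrow> ('e \<Rightarrow> 'v \<times> 'v) \<Rightarrow> bool" where
  "k_edge_connected k V E ends \<longleftrightarrow>
     (\<forall>S. S \<subseteq> V \<and> S \<noteq> {} \<and> S \<noteq> V \<longrightarrow> card (cut_edges E ends S) \<ge> k)"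

text \<open>Circular k/d-flow: an integer flow w.r.t. the reference orientation (reversing an
edge negates its value, and the value set is symmetric) with |f e| in [d, k-d].\<close>
definition circular_flow :: "'v set \<Rightarrow> 'e set \<Rightarrow> ('e \<Rightarrow> 'v \<times> 'v) \<Rightarrow> int \<Rightarrow> int \<Rightarrow> bool" where
  "circular_flow V E ends k d \<longleftrightarrow>
     (\<exists>f :: 'e \<Rightarrow> int.
        (\<forall>e\<in>E. d \<le> \<bar>f e\<bar> \<and> \<bar>f e\<bar> \<le> k - d) \<and>
        (\<forall>v\<in>V. (\<Sum>e\<in>{e\<in>E. fst (ends e) = v}. f e) = (\<Sum>e\<in>{e\<in>E. snd (ends e) = v}. f e)))"

definition flow_index :: "'v set \<Rightarrow> 'e set \<Rightarrow> ('e \<Rightarrow> 'v \<times> 'v) \<Rightarrow> real" where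
  "flow_index V E ends =
     Inf {real_of_int k / real_of_int d | k d. 0 < d \<and> 2 * d \<le> k \<and> circular_flow V E ends k d}"

end

theory Submission imports Defs "HOL-Library.Transitive_Closure_Table" begin

locale mg =
  fixes V :: "'v set" and E :: "'e set" and ends :: "'e \<Rightarrow> 'v \<times> 'v"
  assumes finV: "finite V" and finE: "finite E"
    and srcV: "e \<in> E \<Longrightarrow> fst (ends e) \<in> V" and tgtV: "e \<in> E \<Longrightarrow> snd (ends e) \<in> V"
    and nl: "e \<in> E \<Longrightarrow> fst (ends e) \<noteq> snd (ends e)"
begin

definition ind :: "'v set \<Rightarrow> 'e \<Rightarrow> int" where
  "ind S e = (if fst (ends e) \<in> S then 1 else 0) - (if snd (ends e) \<in> S then 1 else 0)"

definition net :: "('e \<Rightarrow> int) \<Rightarrow> 'v \<Rightarrow> int" where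
  "net f v = (\<Sum>e\<in>E. f e * ind {v} e)"

definition cnt :: "'v set \<Rightarrow> int" where
  "cnt S = int (card (cut_edges E ends S))"

lemma cnt_sum: "cnt S = (\<Sum>e\<in>E. \<bar>ind S e\<bar>)"
proof -
  have "cnt S = (\<Sum>e\<in>cut_edges E ends S. 1)" by (simp add: cnt_def)
  also have "\<dots> = (\<Sum>e\<in>E. if (fst (ends e) \<in> S) \<noteq> (snd (ends e) \<in> S) then 1 else 0)"
    unfolding cut_edges_def by (rule sum.inter_filter[OF finE])
  also have "\<dots> = (\<Sum>e\<in>E. \<bar>ind S e\<bar>)"
    by (rule sum.cong) (auto simp: ind_def)
  finally show ?thesis .
qed

lemma sum_ind: "finite S \<Longrightarrow> (\<Sum>v\<in>S. ind {v} e) = ind S e"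
  by (simp add: ind_def sum_subtractf sum.delta')

lemma sum_net: "finite S \<Longrightarrow> (\<Sum>v\<in>S. net f v) = (\<Sum>e\<in>E. f e * ind S e)"
  unfolding net_def
  by (subst sum.swap) (simp add: sum_distrib_left[symmetric] sum_ind)

lemma ind_V: "e \<in> E \<Longrightarrow> ind V e = 0"
  by (simp add: ind_def srcV tgtV)

lemma net_V: "(\<Sum>v\<in>V. net f v) = 0"
  by (simp add: sum_net finV ind_V)

lemma net_upd: "e \<in> E \<Longrightarrow> net (f(e := f e + c)) v = net f v + c * ind {v} e"
proof -
  assume e: "e \<in> E"
  have "net (f(e := f e + c)) v = (\<Sum>x\<in>E. f x * ind {v} x + (if x = e then c * ind {v} e else 0))"
    unfolding net_def by (rule sum.cong) (auto simp: algebra_simps)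
  also have "\<dots> = net f v + c * ind {v} e"
    by (simp add: sum.distrib net_def e finE)
  finally show ?thesis .
qed

lemma cnt_compl: "S \<subseteq> V \<Longrightarrow> cnt (V - S) = cnt S"
  unfolding cnt_def cut_edges_def using srcV tgtV
  by (metis (no_types, lifting) Diff_iff)

definition boxed :: "('e \<Rightarrow> int) \<Rightarrow> ('e \<Rightarrow> int) \<Rightarrow> ('e \<Rightarrow> int) \<Rightarrow> bool" where
  "boxed l u f \<longleftrightarrow> (\<forall>e\<in>E. l e \<le> f e \<and> f e \<le> u e)"

definition res :: "('e \<Rightarrow> int) \<Rightarrow> ('e \<Rightarrow> int) \<Rightarrow> ('e \<Rightarrow> int) \<Rightarrow> 'v \<Rightarrow> 'v \<Rightarrow> bool" where
  "res l u f x y \<longleftrightarrow> (\<exists>e\<in>E. (fst (ends e) = x \<and> snd (ends e) = y \<and> f e < u e) \<or>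
                                (snd (ends e) = x \<and> fst (ends e) = y \<and> l e < f e))"

definition cap :: "('e \<Rightarrow> int) \<Rightarrow> ('e \<Rightarrow> int) \<Rightarrow> 'v set \<Rightarrow> 'e \<Rightarrow> int" where
  "cap l u S e = (if ind S e = 1 then u e else if ind S e = -1 then - l e else 0)"

lemma push:
  assumes "rtrancl_path (res l u f) x xs y" "distinct (x#xs)" "boxed l u f"
  shows "\<exists>g. boxed l u g \<and> (\<forall>v. net g v = net f v + (if v = x then 1 else 0) - (if v = y then 1 else 0))
          \<and> (\<forall>e\<in>E. g e \<noteq> f e \<longrightarrow> fst (ends e) \<in> set (x#xs) \<and> snd (ends e) \<in> set (x#xs))"
  using assms
proof (induction rule: rtrancl_path.induct)
  case (base x)
  show ?case by (rule exI[of _ f]) (auto simp: base)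
next
  case (step x z ys y)
  from step.prems have d: "distinct (z#ys)" "x \<notin> set (z#ys)" by auto
  from step.IH[OF d(1) step.prems(2)] obtain g where gb: "boxed l u g"
    and gn: "\<forall>v. net g v = net f v + (if v = z then 1 else 0) - (if v = y then 1 else 0)"
    and gc: "\<forall>e\<in>E. g e \<noteq> f e \<longrightarrow> fst (ends e) \<in> set (z#ys) \<and> snd (ends e) \<in> set (z#ys)" by blast
  from step.hyps(1) obtain e where e: "e \<in> E" and arc:
    "(fst (ends e) = x \<and> snd (ends e) = z \<and> f e < u e) \<or> (snd (ends e) = x \<and> fst (ends e) = z \<and> l e < f e)"
    unfolding res_def by blast
  have xz: "x \<noteq> z" using step.prems by auto
  have ge: "g e = f e" using gc e arc d(2) by auto
  from arc show ?case
  proof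
    assume a: "fst (ends e) = x \<and> snd (ends e) = z \<and> f e < u e"
    let ?g = "g(e := g e + 1)"
    have "boxed l u ?g" using gb ge a e unfolding boxed_def by auto
    moreover have "\<forall>v. net ?g v = net f v + (if v = x then 1 else 0) - (if v = y then 1 else 0)"
      using gn a xz by (auto simp: net_upd[OF e] ind_def)
    moreover have "\<forall>e'\<in>E. ?g e' \<noteq> f e' \<longrightarrow> fst (ends e') \<in> set (x#z#ys) \<and> snd (ends e') \<in> set (x#z#ys)"
      using gc a ge by auto
    ultimately show ?case by blast
  next
    assume a: "snd (ends e) = x \<and> fst (ends e) = z \<and> l e < f e"
    let ?g = "g(e := g e + -1)"
    have h: "\<And>v. net ?g v = net g v + -1 * ind {v} e" by (rule net_upd[OF e])
    have "boxed l u ?g" using gb ge a e unfolding boxed_def by auto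
    moreover have "\<forall>v. net ?g v = net f v + (if v = x then 1 else 0) - (if v = y then 1 else 0)"
      using gn a xz h by (auto simp: ind_def)
    moreover have "\<forall>e'\<in>E. ?g e' \<noteq> f e' \<longrightarrow> fst (ends e') \<in> set (x#z#ys) \<and> snd (ends e') \<in> set (x#z#ys)"
      using gc a ge by auto
    ultimately show ?case by blast
  qed
qed

lemma hoffman:
  assumes lu: "\<forall>e\<in>E. l e \<le> u e" and bV: "(\<Sum>v\<in>V. b v) = 0"
    and cut: "\<forall>S. S \<subseteq> V \<longrightarrow> (\<Sum>v\<in>S. b v) \<le> (\<Sum>e\<in>E. cap l u S e)"
  shows "\<exists>f. boxed l u f \<and> (\<forall>v\<in>V. net f v = b v)"
proof -
  let ?P = "\<lambda>f. \<Sum>v\<in>V. nat \<bar>net f v - b v\<bar>"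
  have "boxed l u l" using lu by (simp add: boxed_def)
  from ex_has_least_nat[of "boxed l u" l ?P, OF this] obtain f where
    f: "boxed l u f" and fmin: "\<forall>g. boxed l u g \<longrightarrow> ?P f \<le> ?P g" by blast
  show ?thesis
  proof (rule exI[of _ f], intro conjI f, rule ccontr)
    assume "\<not> (\<forall>v\<in>V. net f v = b v)"
    then obtain v0 where v0: "v0 \<in> V" "net f v0 \<noteq> b v0" by blast
    have s0: "(\<Sum>v\<in>V. net f v - b v) = 0" using net_V bV by (simp add: sum_subtractf)
    have "\<exists>t\<in>V. net f t - b t < 0"
    proof (rule ccontr)
      assume "\<not> ?thesis"
      then have nn: "\<forall>v\<in>V. 0 \<le> net f v - b v" by (simp add: not_less)
      have "\<forall>v\<in>V. net f v - b v = 0" using sum_nonneg_eq_0_iff[OF finV, of "\<lambda>v. net f v - b v"] nn s0 by simp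
      then show False using v0 by auto
    qed
    then obtain t where t: "t \<in> V" "net f t - b t < 0" by blast
    define R where "R = {x\<in>V. (res l u f)\<^sup>*\<^sup>* t x}"
    have tR: "t \<in> R" using t by (simp add: R_def)
    have RV: "R \<subseteq> V" by (auto simp: R_def)
    have finR: "finite R" using RV finV by (rule finite_subset)
    show False
    proof (cases "\<exists>s\<in>R. net f s - b s > 0")
      case True
      then obtain s where s: "s \<in> R" "net f s - b s > 0" by blast
      then have "(res l u f)\<^sup>*\<^sup>* t s" by (simp add: R_def)
      then obtain xs where "rtrancl_path (res l u f) t xs s" by (auto simp: rtranclp_eq_rtrancl_path)
      then obtain xs' where p: "rtrancl_path (res l u f) t xs' s" "distinct (t # xs')"
        by (rule rtrancl_path_distinct)
      from push[OF p f] obtain g where gb: "boxed l u g" and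
        gn: "\<forall>v. net g v = net f v + (if v = t then 1 else 0) - (if v = s then 1 else 0)" by blast
      have st: "s \<noteq> t" using s t by auto
      have sV: "s \<in> V" using s RV by auto
      have "?P g < ?P f"
      proof (rule sum_strict_mono_ex1[OF finV])
        show "\<forall>x\<in>V. nat \<bar>net g x - b x\<bar> \<le> nat \<bar>net f x - b x\<bar>"
        proof
          fix x assume "x \<in> V"
          have "net g x = net f x + (if x = t then 1 else 0) - (if x = s then 1 else 0)" using gn by blast
          then show "nat \<bar>net g x - b x\<bar> \<le> nat \<bar>net f x - b x\<bar>"
            using t s st by (cases "x = t"; cases "x = s") auto
        qed
        show "\<exists>x\<in>V. nat \<bar>net g x - b x\<bar> < nat \<bar>net f x - b x\<bar>"
        proof (rule bexI[of _ t])
          have "net g t = net f t + 1" using gn st by simp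
          then show "nat \<bar>net g t - b t\<bar> < nat \<bar>net f t - b t\<bar>" using t by simp
        qed (use t in simp)
      qed
      then show False using fmin[rule_format, OF gb] by linarith
    next
      case False
      then have le: "\<forall>x\<in>R. net f x - b x \<le> 0" by (auto simp: not_less)
      have lt: "(\<Sum>x\<in>R. net f x - b x) < (\<Sum>x\<in>R. 0)"
        by (rule sum_strict_mono_ex1[OF finR]) (use le tR t in auto)
      have ce: "(\<Sum>e\<in>E. cap l u R e) \<le> (\<Sum>e\<in>E. f e * ind R e)"
      proof (rule sum_mono)
        fix e assume e: "e \<in> E"
        show "cap l u R e \<le> f e * ind R e"
        proof (cases "fst (ends e) \<in> R"; cases "snd (ends e) \<in> R")
          assume a: "fst (ends e) \<in> R" "snd (ends e) \<notin> R"
          have "u e \<le> f e"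
          proof (rule ccontr)
            assume "\<not> u e \<le> f e"
            then have "res l u f (fst (ends e)) (snd (ends e))" using e by (auto simp: res_def)
            then have "(res l u f)\<^sup>*\<^sup>* t (snd (ends e))" using a unfolding R_def
              by (blast intro: rtranclp.rtrancl_into_rtrancl)
            then show False using a tgtV[OF e] unfolding R_def by blast
          qed
          then show ?thesis using a by (simp add: cap_def ind_def)
        next
          assume a: "fst (ends e) \<notin> R" "snd (ends e) \<in> R"
          have "f e \<le> l e"
          proof (rule ccontr)
            assume "\<not> f e \<le> l e"
            then have "res l u f (snd (ends e)) (fst (ends e))" using e by (auto simp: res_def)
            then have "(res l u f)\<^sup>*\<^sup>* t (fst (ends e))" using a unfolding R_def
              by (blast intro: rtranclp.rtrancl_into_rtrancl)
            then show False using a srcV[OF e] unfolding R_def by blast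
          qed
          then show ?thesis using a by (simp add: cap_def ind_def)
        qed (auto simp: cap_def ind_def)
      qed
      have "(\<Sum>x\<in>R. b x) \<le> (\<Sum>e\<in>E. cap l u R e)" using cut RV by blast
      then have "(\<Sum>x\<in>R. b x) \<le> (\<Sum>x\<in>R. net f x)"
        using ce sum_net[OF finR, of f] by linarith
      then show False using lt by (simp add: sum_subtractf)
    qed
  qed
qed

lemma abs_ind_single: "e \<in> E \<Longrightarrow> \<bar>ind {v} e\<bar> = (if fst (ends e) = v then 1 else 0) + (if snd (ends e) = v then 1 else 0)"
  using nl[of e] by (auto simp: ind_def)

lemma sum_cnt_single: "finite S \<Longrightarrow>
  (\<Sum>v\<in>S. cnt {v}) = (\<Sum>e\<in>E. (if fst (ends e) \<in> S then 1 else 0) + (if snd (ends e) \<in> S then 1 else 0))"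
proof -
  assume fS: "finite S"
  have "(\<Sum>v\<in>S. cnt {v}) = (\<Sum>e\<in>E. \<Sum>v\<in>S. \<bar>ind {v} e\<bar>)"
    by (simp add: cnt_sum sum.swap[of _ S])
  also have "\<dots> = (\<Sum>e\<in>E. (if fst (ends e) \<in> S then 1 else 0) + (if snd (ends e) \<in> S then 1 else 0))"
    by (rule sum.cong) (simp_all add: abs_ind_single sum.distrib sum.delta' fS)
  finally show ?thesis .
qed

lemma cnt_empty: "cnt {} = 0" by (simp add: cnt_def cut_edges_def)
lemma cnt_V: "cnt V = 0" by (simp add: cnt_sum ind_V)
lemma cnt_le: "cnt S \<le> int (card E)"
  unfolding cnt_def cut_edges_def by (simp add: card_mono finE)

lemma even_cnt_sum: "even (\<Sum>v\<in>V. cnt {v})"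
proof -
  have "(\<Sum>v\<in>V. cnt {v}) = (\<Sum>e\<in>E. 2)"
    by (simp add: sum_cnt_single finV srcV tgtV)
  then show ?thesis by simp
qed

lemma even_card_odd_aux:
  fixes g :: "'a \<Rightarrow> int"
  shows "finite A \<Longrightarrow> even ((\<Sum>v\<in>A. g v) + int (card {v\<in>A. odd (g v)}))"
proof (induction A rule: finite_induct)
  case empty then show ?case by simp
next
  case (insert x A)
  have "{v\<in>insert x A. odd (g v)} = (if odd (g x) then insert x {v\<in>A. odd (g v)} else {v\<in>A. odd (g v)})"
    by auto
  then show ?case using insert by auto
qed

lemma even_card_T: "even (card {v\<in>V. odd (cnt {v})})"
proof -
  have "even ((\<Sum>v\<in>V. cnt {v}) + int (card {v\<in>V. odd (cnt {v})}))"
    by (rule even_card_odd_aux[OF finV])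
  then show ?thesis using even_cnt_sum by simp
qed

lemma star:
  assumes "e \<in> E" "distinct [p,q,r,s]"
  shows "\<bar>ind {p,q} e\<bar> + \<bar>ind {p,r} e\<bar> + \<bar>ind {p,s} e\<bar> \<ge>
     (if fst (ends e) \<in> {p,q,r,s} then 1 else 0) + (if snd (ends e) \<in> {p,q,r,s} then 1 else 0)"
  using assms nl[of e] by (auto simp: ind_def)

lemma triangle:
  assumes "e \<in> E" "distinct [p,q,r]"
  shows "\<bar>ind {p,q} e\<bar> + \<bar>ind {q,r} e\<bar> + \<bar>ind {p,r} e\<bar> =
     (if fst (ends e) \<in> {p,q,r} then 1 else 0) + (if snd (ends e) \<in> {p,q,r} then 1 else 0) + \<bar>ind {p,q,r} e\<bar>"
  using assms nl[of e] by (auto simp: ind_def)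

lemma star_sum:
  assumes "distinct [p,q,r,s]"
  shows "cnt {p,q} + cnt {p,r} + cnt {p,s} \<ge> cnt {p} + cnt {q} + cnt {r} + cnt {s}"
proof -
  have "cnt {p} + cnt {q} + cnt {r} + cnt {s} = (\<Sum>v\<in>{p,q,r,s}. cnt {v})" using assms by simp
  also have "\<dots> = (\<Sum>e\<in>E. (if fst (ends e) \<in> {p,q,r,s} then 1 else 0) + (if snd (ends e) \<in> {p,q,r,s} then 1 else 0))"
    by (rule sum_cnt_single) simp
  also have "\<dots> \<le> (\<Sum>e\<in>E. \<bar>ind {p,q} e\<bar> + \<bar>ind {p,r} e\<bar> + \<bar>ind {p,s} e\<bar>)"
    by (rule sum_mono) (rule star[OF _ assms])
  also have "\<dots> = cnt {p,q} + cnt {p,r} + cnt {p,s}" by (simp add: cnt_sum sum.distrib)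
  finally show ?thesis .
qed

lemma triangle_sum:
  assumes "distinct [p,q,r]"
  shows "cnt {p,q} + cnt {q,r} + cnt {p,r} = cnt {p} + cnt {q} + cnt {r} + cnt {p,q,r}"
proof -
  have "cnt {p} + cnt {q} + cnt {r} = (\<Sum>v\<in>{p,q,r}. cnt {v})" using assms by simp
  also have "\<dots> = (\<Sum>e\<in>E. (if fst (ends e) \<in> {p,q,r} then 1 else 0) + (if snd (ends e) \<in> {p,q,r} then 1 else 0))"
    by (rule sum_cnt_single) simp
  finally have 1: "cnt {p} + cnt {q} + cnt {r} = \<dots>" .
  have "cnt {p,q} + cnt {q,r} + cnt {p,r} = (\<Sum>e\<in>E. \<bar>ind {p,q} e\<bar> + \<bar>ind {q,r} e\<bar> + \<bar>ind {p,r} e\<bar>)"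
    by (simp add: cnt_sum sum.distrib)
  also have "\<dots> = (\<Sum>e\<in>E. (if fst (ends e) \<in> {p,q,r} then 1 else 0) + (if snd (ends e) \<in> {p,q,r} then 1 else 0) + \<bar>ind {p,q,r} e\<bar>)"
    by (rule sum.cong) (simp_all add: triangle[OF _ assms])
  also have "\<dots> = cnt {p} + cnt {q} + cnt {r} + cnt {p,q,r}"
    using 1 by (simp add: sum.distrib cnt_sum)
  finally show ?thesis .
qed

lemma form:
  assumes cV: "card V \<le> 5" and d: "distinct [p,q,r,s]" and sub: "{p,q,r,s} \<subseteq> V"
    and SV: "S \<subseteq> V" and in1: "p \<in> S" "q \<in> S" and out1: "r \<notin> S" "s \<notin> S"
  shows "S = {p,q} \<or> V - S = {r,s}"
proof -
  have "card {p,q,r,s} = 4" using d by simp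
  then have "card (V - {p,q,r,s}) = card V - 4" using card_Diff_subset[OF _ sub] by simp
  then have "card (V - {p,q,r,s}) \<le> Suc 0" using cV by simp
  then have uniq: "\<forall>x\<in>V - {p,q,r,s}. \<forall>y\<in>V - {p,q,r,s}. x = y"
    using card_le_Suc0_iff_eq[of "V - {p,q,r,s}"] finV by blast
  show ?thesis
  proof (cases "S \<subseteq> {p,q}")
    case True then show ?thesis using in1 by auto
  next
    case False
    then obtain w where w: "w \<in> S" "w \<notin> {p,q}" by blast
    then have wV: "w \<in> V - {p,q,r,s}" using SV out1 by auto
    have "V - S = {r,s}"
    proof
      show "V - S \<subseteq> {r,s}"
      proof
        fix x assume x: "x \<in> V - S"
        show "x \<in> {r,s}"
        proof (rule ccontr)
          assume "x \<notin> {r,s}"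
          then have "x \<in> V - {p,q,r,s}" using x in1 by auto
          then have "x = w" using uniq wV by blast
          then show False using x w by auto
        qed
      qed
      show "{r,s} \<subseteq> V - S" using sub out1 by auto
    qed
    then show ?thesis by blast
  qed
qed

lemma odd5: "odd (x::int) \<Longrightarrow> x \<ge> 4 \<Longrightarrow> x \<ge> 5"
  by presburger

lemma stepA:
  assumes kec: "k_edge_connected 4 V E ends" and cV: "card V \<le> 5"
  shows "\<exists>\<beta>::'v\<Rightarrow>int. (\<forall>v\<in>V. even (\<beta> v + cnt {v})) \<and> (\<Sum>v\<in>V. \<beta> v) = 0 \<and>
           (\<forall>S. S \<subseteq> V \<longrightarrow> S \<noteq> {} \<longrightarrow> S \<noteq> V \<longrightarrow> 3 * \<bar>\<Sum>v\<in>S. \<beta> v\<bar> < cnt S)"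
proof -
  have c4: "\<And>S. S \<subseteq> V \<Longrightarrow> S \<noteq> {} \<Longrightarrow> S \<noteq> V \<Longrightarrow> cnt S \<ge> 4"
    using kec unfolding k_edge_connected_def cnt_def by auto
  define T where "T = {v\<in>V. odd (cnt {v})}"
  have TV: "T \<subseteq> V" by (auto simp: T_def)
  have finT: "finite T" using TV finV by (rule finite_subset)
  have evT: "even (card T)" using even_card_T by (simp add: T_def)
  have cT: "card T \<le> 5" using card_mono[OF finV TV] cV by simp
  have T5: "\<And>v. v \<in> T \<Longrightarrow> 2 \<le> card T \<Longrightarrow> cnt {v} \<ge> 5"
  proof -
    fix v assume v: "v \<in> T" and c2: "2 \<le> card T"
    have "{v} \<noteq> V"
    proof
      assume h: "{v} = V"
      have "card V = 1" using h[symmetric] by simp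
      then show False using card_mono[OF finV TV] c2 by simp
    qed
    then have "cnt {v} \<ge> 4" using c4[of "{v}"] v TV by auto
    then show "cnt {v} \<ge> 5" using v odd5 by (auto simp: T_def)
  qed
  have notT: "\<And>v. v \<in> V \<Longrightarrow> v \<notin> T \<Longrightarrow> even (cnt {v})" by (auto simp: T_def)
  have "card T = 0 \<or> card T = 2 \<or> card T = 4" using evT cT by presburger
  moreover
  { assume "card T = 0"
    then have "T = {}" using finT by simp
    then have "\<forall>v\<in>V. even ((0::int) + cnt {v})" using notT by auto
    moreover have "\<forall>S. S \<subseteq> V \<longrightarrow> S \<noteq> {} \<longrightarrow> S \<noteq> V \<longrightarrow> 3 * \<bar>\<Sum>v\<in>S. (0::int)\<bar> < cnt S"
    proof (intro allI impI)
      fix S assume S: "S \<subseteq> V" "S \<noteq> {}" "S \<noteq> V"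
      show "3 * \<bar>\<Sum>v\<in>S. (0::int)\<bar> < cnt S" using c4[OF S] by simp
    qed
    ultimately have ?thesis by (intro exI[of _ "\<lambda>_. 0"]) simp }
  moreover
  { assume "card T = 2"
    then obtain a b where ab: "T = {a,b}" "a \<noteq> b" by (auto simp: card_2_iff)
    define \<beta> where "\<beta> v = (if v = a then 1 else 0) - (if v = b then (1::int) else 0)" for v
    have sb: "finite S \<Longrightarrow> (\<Sum>v\<in>S. \<beta> v) = (if a \<in> S then 1 else 0) - (if b \<in> S then 1 else 0)" for S
      by (simp add: \<beta>_def sum_subtractf)
    have abV: "a \<in> V" "b \<in> V" using ab TV by auto
    have oa: "odd (cnt {a})" "odd (cnt {b})" using ab by (auto simp: T_def)
    have "\<forall>v\<in>V. even (\<beta> v + cnt {v})"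
    proof
      fix v assume v: "v \<in> V"
      show "even (\<beta> v + cnt {v})"
        using oa notT[OF v] ab by (cases "v = a"; cases "v = b") (auto simp: \<beta>_def)
    qed
    moreover have "(\<Sum>v\<in>V. \<beta> v) = 0" using sb[OF finV] abV ab by simp
    moreover have "\<forall>S. S \<subseteq> V \<longrightarrow> S \<noteq> {} \<longrightarrow> S \<noteq> V \<longrightarrow> 3 * \<bar>\<Sum>v\<in>S. \<beta> v\<bar> < cnt S"
    proof (intro allI impI)
      fix S assume S: "S \<subseteq> V" "S \<noteq> {}" "S \<noteq> V"
      have fS: "finite S" using S(1) finV by (rule finite_subset)
      have "\<bar>\<Sum>v\<in>S. \<beta> v\<bar> \<le> 1" using sb[OF fS] by auto
      then show "3 * \<bar>\<Sum>v\<in>S. \<beta> v\<bar> < cnt S" using c4[OF S] by linarith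
    qed
    ultimately have ?thesis by blast }
  moreover
  { assume c4T: "card T = 4"
    then obtain a B where aB: "T = insert a B" "a \<notin> B" "card B = 3"
      using card_Suc_eq[of T 3] by auto
    then obtain b c d where B: "B = {b,c,d}" "b \<noteq> c" "c \<noteq> d" "b \<noteq> d" by (auto simp: card_3_iff)
    have Td: "T = {a,b,c,d}" and dist: "distinct [a,b,c,d]" using aB B by auto
    have abcdV: "{a,b,c,d} \<subseteq> V" using Td TV by auto
    have g5: "cnt {a} \<ge> 5" "cnt {b} \<ge> 5" "cnt {c} \<ge> 5" "cnt {d} \<ge> 5"
      using T5 c4T Td by auto
    have tri: "cnt {x,y,z} \<ge> 4" if "{x,y,z,w} = {a,b,c,d}" "distinct [x,y,z,w]" for x y z w
    proof (rule c4)
      show "{x,y,z} \<subseteq> V" using that abcdV by auto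
      show "{x,y,z} \<noteq> {}" by auto
      show "{x,y,z} \<noteq> V" using that abcdV by auto
    qed
    have key: "\<exists>p q r s. distinct [p,q,r,s] \<and> {p,q,r,s} = T \<and> cnt {p,q} \<ge> 7 \<and> cnt {r,s} \<ge> 7"
    proof (rule ccontr)
      assume nk: "\<not> ?thesis"
      have h1: "cnt {a,b} \<le> 6 \<or> cnt {c,d} \<le> 6" using nk dist Td by force
      have h2: "cnt {a,c} \<le> 6 \<or> cnt {b,d} \<le> 6"
      proof -
        have "{a,c,b,d} = T" using Td by auto
        then show ?thesis using nk dist by force
      qed
      have h3: "cnt {a,d} \<le> 6 \<or> cnt {b,c} \<le> 6"
      proof -
        have "{a,d,b,c} = T" using Td by auto
        then show ?thesis using nk dist by force
      qed
      have sa: "cnt {a,b} + cnt {a,c} + cnt {a,d} \<ge> 20" proof -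
        have "distinct [a,b,c,d]" using dist by auto
        then show ?thesis using star_sum[of a b c d] g5 by linarith
      qed
      have sb: "cnt {b,a} + cnt {b,c} + cnt {b,d} \<ge> 20" proof -
        have "distinct [b,a,c,d]" using dist by auto
        then show ?thesis using star_sum[of b a c d] g5 by linarith
      qed
      have sc: "cnt {c,a} + cnt {c,b} + cnt {c,d} \<ge> 20" proof -
        have "distinct [c,a,b,d]" using dist by auto
        then show ?thesis using star_sum[of c a b d] g5 by linarith
      qed
      have sd: "cnt {d,a} + cnt {d,b} + cnt {d,c} \<ge> 20" proof -
        have "distinct [d,a,b,c]" using dist by auto
        then show ?thesis using star_sum[of d a b c] g5 by linarith
      qed
      have ta: "cnt {a,b} + cnt {b,c} + cnt {a,c} \<ge> 19"
        using triangle_sum[of a b c] dist g5 tri[of a b c d] Td by auto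
      have tb: "cnt {a,b} + cnt {b,d} + cnt {a,d} \<ge> 19"
        using triangle_sum[of a b d] dist g5 tri[of a b d c] Td by (auto simp: insert_commute)
      have tc: "cnt {a,c} + cnt {c,d} + cnt {a,d} \<ge> 19"
        using triangle_sum[of a c d] dist g5 tri[of a c d b] Td by (auto simp: insert_commute)
      have td: "cnt {b,c} + cnt {c,d} + cnt {b,d} \<ge> 19"
        using triangle_sum[of b c d] dist g5 tri[of b c d a] Td by (auto simp: insert_commute)
      have e1: "{b,a} = {a,b}" "{c,a} = {a,c}" "{c,b} = {b,c}" "{d,a} = {a,d}" "{d,b} = {b,d}" "{d,c} = {c,d}"
        by auto
      show False using h1 h2 h3 sa sb sc sd ta tb tc td unfolding e1 by linarith
    qed
    then obtain p q r s where pqrs: "distinct [p,q,r,s]" "{p,q,r,s} = T" "cnt {p,q} \<ge> 7" "cnt {r,s} \<ge> 7"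
      by blast
    define \<beta> where "\<beta> v = (if v = p then 1 else 0) + (if v = q then 1 else 0)
       - (if v = r then 1 else 0) - (if v = s then (1::int) else 0)" for v
    have sb: "finite S \<Longrightarrow> (\<Sum>v\<in>S. \<beta> v) = (if p \<in> S then 1 else 0) + (if q \<in> S then 1 else 0)
       - (if r \<in> S then 1 else 0) - (if s \<in> S then 1 else 0)" for S
      by (simp add: \<beta>_def sum_subtractf sum.distrib)
    have pV: "{p,q,r,s} \<subseteq> V" using pqrs TV by auto
    have "\<forall>v\<in>V. even (\<beta> v + cnt {v})"
    proof
      fix v assume v: "v \<in> V"
      show "even (\<beta> v + cnt {v})"
      proof (cases "v \<in> T")
        case True
        then have "odd (cnt {v})" by (simp add: T_def)
        moreover have "\<beta> v = 1 \<or> \<beta> v = -1" using True pqrs by (auto simp: \<beta>_def)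
        ultimately show ?thesis by auto
      next
        case False
        then have "\<beta> v = 0" using pqrs by (auto simp: \<beta>_def)
        then show ?thesis using notT[OF v False] by simp
      qed
    qed
    moreover have "(\<Sum>v\<in>V. \<beta> v) = 0" using sb[OF finV] pV by simp
    moreover have "\<forall>S. S \<subseteq> V \<longrightarrow> S \<noteq> {} \<longrightarrow> S \<noteq> V \<longrightarrow> 3 * \<bar>\<Sum>v\<in>S. \<beta> v\<bar> < cnt S"
    proof (intro allI impI)
      fix S assume S: "S \<subseteq> V" "S \<noteq> {}" "S \<noteq> V"
      have fS: "finite S" using S(1) finV by (rule finite_subset)
      show "3 * \<bar>\<Sum>v\<in>S. \<beta> v\<bar> < cnt S"
      proof (cases "p \<in> S \<and> q \<in> S \<and> r \<notin> S \<and> s \<notin> S")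
        case True
        then have "S = {p,q} \<or> V - S = {r,s}" using form[OF cV pqrs(1) pV S(1)] by blast
        then have "cnt S \<ge> 7"
        proof
          assume "S = {p,q}" then show ?thesis using pqrs(3) by simp
        next
          assume "V - S = {r,s}" then show ?thesis using pqrs(4) cnt_compl[OF S(1)] by simp
        qed
        moreover have "(\<Sum>v\<in>S. \<beta> v) = 2" using sb[OF fS] True by simp
        ultimately show ?thesis by simp
      next
        case F1: False
        show ?thesis
        proof (cases "r \<in> S \<and> s \<in> S \<and> p \<notin> S \<and> q \<notin> S")
          case True
          have d2: "distinct [p,q,r,s]" using pqrs by simp
          have "V - S = {p,q} \<or> V - (V - S) = {r,s}"
            using form[OF cV d2 pV, of "V - S"] True S(1) pV by auto
          moreover have "V - (V - S) = S" using S(1) by auto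
          ultimately have "S = {r,s} \<or> V - S = {p,q}" by auto
          then have "cnt S \<ge> 7"
          proof
            assume "S = {r,s}" then show ?thesis using pqrs(4) by simp
          next
            assume "V - S = {p,q}" then show ?thesis using pqrs(3) cnt_compl[OF S(1)] by simp
          qed
          moreover have "(\<Sum>v\<in>S. \<beta> v) = -2" using sb[OF fS] True by simp
          ultimately show ?thesis by simp
        next
          case False
          have "\<bar>\<Sum>v\<in>S. \<beta> v\<bar> \<le> 1" using sb[OF fS] F1 False by auto
          then show ?thesis using c4[OF S] by linarith
        qed
      qed
    qed
    ultimately have ?thesis by blast }
  ultimately show ?thesis by blast
qed

lemma net_lin: "net (\<lambda>e. 2 * y e - 1) v = 2 * net y v - net (\<lambda>_. 1) v"
proof -
  have "(\<Sum>e\<in>E. (2 * y e - 1) * ind {v} e) = (\<Sum>e\<in>E. 2 * (y e * ind {v} e) - 1 * ind {v} e)"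
    by (rule sum.cong) (auto simp: algebra_simps)
  also have "\<dots> = 2 * (\<Sum>e\<in>E. y e * ind {v} e) - (\<Sum>e\<in>E. 1 * ind {v} e)"
    by (simp only: sum_subtractf sum_distrib_left)
  finally show ?thesis unfolding net_def .
qed

lemma N_parity: "even (cnt {v} - net (\<lambda>_. 1) v)"
proof -
  have "cnt {v} - net (\<lambda>_. 1) v = (\<Sum>e\<in>E. \<bar>ind {v} e\<bar> - ind {v} e)"
    unfolding cnt_sum net_def by (simp add: sum_subtractf)
  moreover have "even (\<Sum>e\<in>E. \<bar>ind {v} e\<bar> - ind {v} e)"
  proof (rule dvd_sum)
    fix e show "even (\<bar>ind {v} e\<bar> - ind {v} e)" by (auto simp: ind_def)
  qed
  ultimately show ?thesis by simp
qed

lemma conserv: "net f v = (\<Sum>e\<in>{e\<in>E. fst (ends e) = v}. f e) - (\<Sum>e\<in>{e\<in>E. snd (ends e) = v}. f e)"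
proof -
  have "net f v = (\<Sum>e\<in>E. (if fst (ends e) = v then f e else 0) - (if snd (ends e) = v then f e else 0))"
    unfolding net_def by (rule sum.cong) (auto simp: ind_def)
  also have "\<dots> = (\<Sum>e\<in>{e\<in>E. fst (ends e) = v}. f e) - (\<Sum>e\<in>{e\<in>E. snd (ends e) = v}. f e)"
    by (simp add: sum_subtractf sum.inter_filter[OF finE])
  finally show ?thesis .
qed

lemma main_flow:
  assumes kec: "k_edge_connected 4 V E ends" and cV: "card V \<le> 5"
  shows "\<exists>d>0. circular_flow V E ends (3*d-1) d"
proof -
  obtain \<beta> :: "'v \<Rightarrow> int" where hpar: "\<forall>v\<in>V. even (\<beta> v + cnt {v})" and hsum: "(\<Sum>v\<in>V. \<beta> v) = 0"
    and hcut: "\<forall>S. S \<subseteq> V \<longrightarrow> S \<noteq> {} \<longrightarrow> S \<noteq> V \<longrightarrow> 3 * \<bar>\<Sum>v\<in>S. \<beta> v\<bar> < cnt S"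
    using stepA[OF kec cV] by blast
  have bS: "\<bar>\<Sum>v\<in>S. \<beta> v\<bar> * 3 < cnt S \<or> (S = {} \<or> S = V)" if "S \<subseteq> V" for S
    using hcut that by (auto simp: mult.commute)
  define N where "N v = net (\<lambda>_. 1) v" for v
  define b where "b v = (\<beta> v + N v) div 2" for v
  have b2: "2 * b v = \<beta> v + N v" if v: "v \<in> V" for v
  proof -
    have "even (\<beta> v + N v)"
    proof -
      have "\<beta> v + N v = (\<beta> v + cnt {v}) - (cnt {v} - N v)" by simp
      then show ?thesis using hpar v N_parity[of v] unfolding N_def by (metis dvd_diff)
    qed
    then show ?thesis unfolding b_def by simp
  qed
  have "2 * (\<Sum>v\<in>V. b v) = (\<Sum>v\<in>V. \<beta> v + N v)"
    unfolding sum_distrib_left by (rule sum.cong) (simp_all add: b2)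
  also have "\<dots> = 0" using hsum net_V[of "\<lambda>_. 1"] by (simp add: sum.distrib N_def)
  finally have bsum: "(\<Sum>v\<in>V. b v) = 0" by simp
  have bcut: "\<forall>S. S \<subseteq> V \<longrightarrow> (\<Sum>v\<in>S. b v) \<le> (\<Sum>e\<in>E. cap (\<lambda>_. 0) (\<lambda>_. 1) S e)"
  proof (intro allI impI)
    fix S assume SV: "S \<subseteq> V"
    have fS: "finite S" using SV finV by (rule finite_subset)
    have "2 * (\<Sum>v\<in>S. b v) = (\<Sum>v\<in>S. \<beta> v + N v)"
      unfolding sum_distrib_left using SV by (intro sum.cong) (auto simp: b2)
    also have "\<dots> = (\<Sum>v\<in>S. \<beta> v) + (\<Sum>v\<in>S. N v)" by (rule sum.distrib)
    also have "(\<Sum>v\<in>S. N v) = (\<Sum>e\<in>E. ind S e)" unfolding N_def using sum_net[OF fS] by simp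
    finally have 1: "2 * (\<Sum>v\<in>S. b v) = (\<Sum>v\<in>S. \<beta> v) + (\<Sum>e\<in>E. ind S e)" .
    have 2: "(\<Sum>v\<in>S. \<beta> v) \<le> cnt S"
    proof (cases "S = {} \<or> S = V")
      case True then show ?thesis using hsum cnt_V cnt_empty by auto
    next
      case False then show ?thesis using bS[OF SV] by linarith
    qed
    have 3: "2 * (\<Sum>e\<in>E. cap (\<lambda>_. 0) (\<lambda>_. 1) S e) = cnt S + (\<Sum>e\<in>E. ind S e)"
    proof -
      have "2 * (\<Sum>e\<in>E. cap (\<lambda>_. 0) (\<lambda>_. 1) S e) = (\<Sum>e\<in>E. \<bar>ind S e\<bar> + ind S e)"
        unfolding sum_distrib_left by (rule sum.cong) (auto simp: cap_def ind_def)
      then show ?thesis by (simp add: sum.distrib cnt_sum)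
    qed
    show "(\<Sum>v\<in>S. b v) \<le> (\<Sum>e\<in>E. cap (\<lambda>_. 0) (\<lambda>_. 1) S e)" using 1 2 3 by linarith
  qed
  have lu0: "\<forall>e\<in>E. (0::int) \<le> 1" by simp
  obtain y where yb: "boxed (\<lambda>_. 0) (\<lambda>_. 1) y" and yn: "\<forall>v\<in>V. net y v = b v"
    using hoffman[OF lu0 bsum bcut] by blast
  define s where "s e = 2 * y e - 1" for e
  have s1: "s e = 1 \<or> s e = -1" if "e \<in> E" for e
  proof -
    have "0 \<le> y e" "y e \<le> 1" using yb that by (auto simp: boxed_def)
    then have "y e = 0 \<or> y e = 1" by linarith
    then show ?thesis by (auto simp: s_def)
  qed
  have ns: "net s v = \<beta> v" if "v \<in> V" for v
  proof -
    have "net s v = 2 * net y v - N v" unfolding s_def N_def by (rule net_lin)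
    then show ?thesis using b2[OF that] yn that by simp
  qed
  define d where "d = 2 * int (card E) + 1"
  have d1: "d \<ge> 1" by (simp add: d_def)
  define l where "l e = (if s e = 1 then d else -(2*d-1))" for e
  define u where "u e = (if s e = 1 then 2*d-1 else -d)" for e
  have lu: "\<forall>e\<in>E. l e \<le> u e" using d1 by (auto simp: l_def u_def)
  have zs: "(\<Sum>v\<in>V. (0::int)) = 0" by simp
  have ccut: "\<forall>S. S \<subseteq> V \<longrightarrow> (\<Sum>v\<in>S. (0::int)) \<le> (\<Sum>e\<in>E. cap l u S e)"
  proof (intro allI impI)
    fix S assume SV: "S \<subseteq> V"
    have fS: "finite S" using SV finV by (rule finite_subset)
    define B where "B = (\<Sum>e\<in>E. s e * ind S e)"
    define C where "C = cnt S"
    have BB: "B = (\<Sum>v\<in>S. \<beta> v)"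
    proof -
      have "B = (\<Sum>v\<in>S. net s v)" unfolding B_def using sum_net[OF fS] by simp
      also have "\<dots> = (\<Sum>v\<in>S. \<beta> v)" using SV ns by (intro sum.cong) auto
      finally show ?thesis .
    qed
    have pe: "2 * cap l u S e = (d-1) * \<bar>ind S e\<bar> + (3*d-1) * (s e * ind S e)" if e: "e \<in> E" for e
      using s1[OF e] unfolding cap_def ind_def l_def u_def
      by (cases "fst (ends e) \<in> S"; cases "snd (ends e) \<in> S") (auto simp: algebra_simps)
    have "2 * (\<Sum>e\<in>E. cap l u S e) = (\<Sum>e\<in>E. (d-1) * \<bar>ind S e\<bar> + (3*d-1) * (s e * ind S e))"
      unfolding sum_distrib_left by (rule sum.cong) (simp_all add: pe)
    also have "\<dots> = (\<Sum>e\<in>E. (d-1) * \<bar>ind S e\<bar>) + (\<Sum>e\<in>E. (3*d-1) * (s e * ind S e))"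
      by (rule sum.distrib)
    also have "\<dots> = (d-1) * C + (3*d-1) * B"
      unfolding C_def B_def cnt_sum by (simp only: sum_distrib_left)
    finally have eq: "2 * (\<Sum>e\<in>E. cap l u S e) = (d-1) * C + (3*d-1) * B" .
    have "0 \<le> (d-1) * C + (3*d-1) * B"
    proof (cases "S = {} \<or> S = V")
      case True then have "B = 0" "C = 0" using hsum cnt_V cnt_empty BB C_def by auto
      then show ?thesis by simp
    next
      case False
      then have lt: "\<bar>B\<bar> * 3 < C" using bS[OF SV] BB C_def by auto
      have Cl: "C \<le> int (card E)" using cnt_le C_def by simp
      have "d * (C + 3*B) \<ge> d * 1" using lt d1 by (intro mult_left_mono) auto
      moreover have "(d-1) * C + (3*d-1) * B = d * (C + 3*B) - (C + B)" by (simp add: algebra_simps)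
      moreover have "C + B \<le> d - 1" using lt Cl d_def by linarith
      ultimately show ?thesis by linarith
    qed
    then show "(\<Sum>v\<in>S. (0::int)) \<le> (\<Sum>e\<in>E. cap l u S e)" using eq by simp
  qed
  obtain f where fb: "boxed l u f" and fn: "\<forall>v\<in>V. net f v = 0"
    using hoffman[OF lu zs ccut] by blast
  have "circular_flow V E ends (3*d-1) d"
    unfolding circular_flow_def
  proof (rule exI[of _ f], intro conjI ballI)
    fix e assume e: "e \<in> E"
    have "l e \<le> f e" "f e \<le> u e" using fb e by (auto simp: boxed_def)
    then show "d \<le> \<bar>f e\<bar>" "\<bar>f e\<bar> \<le> 3*d-1-d"
      using s1[OF e] d1 by (auto simp: l_def u_def)
  next
    fix v assume v: "v \<in> V"
    show "(\<Sum>e\<in>{e\<in>E. fst (ends e) = v}. f e) = (\<Sum>e\<in>{e\<in>E. snd (ends e) = v}. f e)"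
      using fn v conserv[of f v] by simp
  qed
  then show ?thesis using d1 by (intro exI[of _ d]) auto
qed


end

theorem mainTheorem14:
  fixes V :: "'v set" and E :: "'e set" and ends :: "'e \<Rightarrow> 'v \<times> 'v"
  assumes "multigraph V E ends"
    and "k_edge_connected 4 V E ends"
    and "card V \<le> 5"
  shows "flow_index V E ends < 3"
proof -
  interpret mg V E ends using assms(1) unfolding multigraph_def by unfold_locales auto
  obtain d where d: "d > 0" "circular_flow V E ends (3*d-1) d" using main_flow[OF assms(2,3)] by blast
  let ?A = "{real_of_int k / real_of_int d | k d. 0 < d \<and> 2 * d \<le> k \<and> circular_flow V E ends k d}"
  have mem: "real_of_int (3*d-1) / real_of_int d \<in> ?A"
  proof -
    have "0 < d \<and> 2 * d \<le> 3*d-1 \<and> circular_flow V E ends (3*d-1) d" using d by auto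
    then show ?thesis by blast
  qed
  have bdd: "bdd_below ?A"
  proof (rule bdd_belowI[of _ 0])
    fix x assume "x \<in> ?A"
    then obtain k d' where "x = real_of_int k / real_of_int d'" "0 < d'" "2 * d' \<le> k" by blast
    then show "0 \<le> x" by simp
  qed
  have lt: "real_of_int (3*d-1) / real_of_int d < 3" using d by (simp add: divide_less_eq)
  show ?thesis unfolding flow_index_def using cInf_lower[OF mem bdd] lt by linarith
qed

end
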